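(* Let $\kappa$ be a regular infinite cardinal, let $\eta > \kappa^{++}$ be an ordinal, and let $f = \langle \kappa_\xi : \xi < \eta\rangle$ be the cardinal sequence of some LCS space. Let $\alpha < \eta$ be an ordinal with $\mathrm{cf}(\alpha) > \kappa^+$ such that there is a strictly increasing sequence of ordinals $\langle \alpha_\xi : \xi < \mathrm{cf}(\alpha)\rangle$ converging to $\alpha$ with $\kappa_{\alpha_\xi} \le \kappa$ for every $\xi < \mathrm{cf}(\alpha)$. Then $\kappa_\alpha \le \kappa$.
   Context: An LCS space is a locally compact, Hausdorff, scattered topological space. For an LCS space $X$ and an ordinal $\alpha$, the $\alpha$-th Cantor–Bendixson level $I_\alpha(X)$ is the set of isolated points of $X \setminus \bigcup\{I_\beta(X) : \beta < \alpha\}$. The reduced height $\mathrm{ht}^-(X)$ is the least ordinal $\delta$ such that $I_\delta(X)$ is finite. The cardinal sequence of $X$ is $\mathrm{CS}(X) = \langle |I_\alpha(X)| : \alpha < \mathrm{ht}^-(X)\rangle$. A sequence $f$ of cardinals is "the cardinal sequence of some LCS space" if $f = \mathrm{CS}(X)$ for some LCS space $X$. *)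

theory Defs
  imports "HOL-Analysis.Analysis"
begin

definition isolated_points_of :: "'a topology \<Rightarrow> 'a set \<Rightarrow> 'a set" where
  "isolated_points_of X S = {x \<in> S. \<exists>U. openin X U \<and> U \<inter> S = {x}}"

definition scattered_space :: "'a topology \<Rightarrow> bool" where
  "scattered_space X \<longleftrightarrow>
     (\<forall>S. S \<subseteq> topspace X \<and> S \<noteq> {} \<longrightarrow> isolated_points_of X S \<noteq> {})"

definition LCS_space :: "'a topology \<Rightarrow> bool" where
  "LCS_space X \<longleftrightarrow> locally_compact_space X \<and> Hausdorff_space X \<and> scattered_space X"

text \<open>Ordinals are represented as elements of an arbitrary well-ordered type 'o.
  The ordinal represented by eta is the order type of the initial segment below eta.\<close>

definition ord_seg :: "'o::wellorder \<Rightarrow> 'o rel" where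
  "ord_seg \<eta> = {(x, y). x \<le> y \<and> x < \<eta> \<and> y < \<eta>}"

definition cofinal_seq :: "('o::wellorder \<Rightarrow> 'o) \<Rightarrow> 'o \<Rightarrow> 'o \<Rightarrow> bool" where
  "cofinal_seq g \<delta> \<alpha> \<longleftrightarrow>
     (\<forall>\<xi>. \<xi> < \<delta> \<longrightarrow> g \<xi> < \<alpha>) \<and>
     (\<forall>\<xi> \<zeta>. \<xi> < \<zeta> \<and> \<zeta> < \<delta> \<longrightarrow> g \<xi> < g \<zeta>) \<and>
     (\<forall>\<beta>. \<beta> < \<alpha> \<longrightarrow> (\<exists>\<xi>. \<xi> < \<delta> \<and> \<beta> \<le> g \<xi>))"

definition cof :: "'o::wellorder \<Rightarrow> 'o" where
  "cof \<alpha> = (LEAST \<delta>. \<exists>g. cofinal_seq g \<delta> \<alpha>)"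

definition CB_level :: "'a topology \<Rightarrow> 'o::wellorder \<Rightarrow> 'a set" where
  "CB_level X = wfrec {(x, y). x < y}
     (\<lambda>F \<alpha>. isolated_points_of X (topspace X - \<Union> (F ` {\<beta>. \<beta> < \<alpha>})))"

lemma CB_level_eq:
  "CB_level X \<alpha> = isolated_points_of X (topspace X - \<Union> (CB_level X ` {\<beta>. \<beta> < \<alpha>}))"
proof -
  have wf: "wf {(x, y::'b::wellorder). x < y}"
    by (rule wellorder_class.wf)
  show ?thesis
    unfolding CB_level_def
    by (subst wfrec[OF wf]) (simp add: cut_def image_def)
qed

definition reduced_height_is :: "'a topology \<Rightarrow> 'o::wellorder \<Rightarrow> bool" where
  "reduced_height_is X \<eta> \<longleftrightarrow>
     finite (CB_level X \<eta>) \<and> (\<forall>\<xi>. \<xi> < \<eta> \<longrightarrow> infinite (CB_level X \<xi>))"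

end

theory Submission
  imports Defs
begin

unbundle cardinal_syntax

lemma Field_ord_seg: "Field (ord_seg (c::'o::wellorder)) = {x. x < c}"
  unfolding ord_seg_def Field_def by auto

lemma Well_order_ord_seg: "Well_order (ord_seg (c::'o::wellorder))"
proof -
  have "well_order_on {x. x < c} (ord_seg c)"
    unfolding well_order_on_def linear_order_on_def partial_order_on_def preorder_on_def
      refl_on_def trans_on_def antisym_on_def total_on_def ord_seg_def
  proof (intro conjI)
    show "wf ({(x, y). x \<le> y \<and> x < c \<and> y < c} - Id)"
      by (rule wf_subset[OF wf], auto)
  qed auto
  then show ?thesis by (simp add: Field_ord_seg)
qed

lemma Restr_ord_seg: "(a::'o::wellorder) < c \<Longrightarrow> Restr (ord_seg c) (underS (ord_seg c) a) = ord_seg a"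
  unfolding ord_seg_def underS_def by auto

lemma cofinal_mono:
  assumes "cofinal_seq g c \<alpha>" "\<xi> \<le> \<xi>'" "\<xi>' < c"
  shows "g \<xi> \<le> g \<xi>'"
  using assms unfolding cofinal_seq_def by (metis order_le_less order.strict_implies_order)

lemma no_short_cofinal:
  fixes g k :: "'o::wellorder \<Rightarrow> 'o"
  assumes g: "cofinal_seq g (cof \<alpha>) \<alpha>" and L: "L < cof \<alpha>"
    and kc: "\<forall>\<zeta><L. k \<zeta> < cof \<alpha>"
    and ks: "\<forall>\<zeta> \<zeta>'. \<zeta> < \<zeta>' \<and> \<zeta>' < L \<longrightarrow> k \<zeta> < k \<zeta>'"
    and kf: "\<forall>\<xi><cof \<alpha>. \<exists>\<zeta><L. \<xi> \<le> k \<zeta>"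
  shows False
proof -
  have "cofinal_seq (g \<circ> k) L \<alpha>"
    unfolding cofinal_seq_def
  proof (intro conjI allI impI)
    fix \<xi> assume "\<xi> < L" then show "(g \<circ> k) \<xi> < \<alpha>" using g kc unfolding cofinal_seq_def by simp
  next
    fix \<xi> \<zeta> assume "\<xi> < \<zeta> \<and> \<zeta> < L"
    then show "(g \<circ> k) \<xi> < (g \<circ> k) \<zeta>" using g kc ks unfolding cofinal_seq_def by simp
  next
    fix \<beta> assume "\<beta> < \<alpha>"
    then obtain \<xi> where "\<xi> < cof \<alpha>" "\<beta> \<le> g \<xi>" using g unfolding cofinal_seq_def by blast
    then obtain \<zeta> where "\<zeta> < L" "\<xi> \<le> k \<zeta>" using kf by blast
    then have "g \<xi> \<le> g (k \<zeta>)" using cofinal_mono[OF g] kc by blast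
    then show "\<exists>\<xi><L. \<beta> \<le> (g \<circ> k) \<xi>" using \<open>\<zeta> < L\<close> \<open>\<beta> \<le> g \<xi>\<close> by auto
  qed
  then have "cof \<alpha> \<le> L" unfolding cof_def by (rule Least_le[where P="\<lambda>\<delta>. \<exists>g. cofinal_seq g \<delta> \<alpha>", OF exI])
  with L show False by simp
qed

lemma bounded_below_cof:
  fixes g h :: "'o::wellorder \<Rightarrow> 'o"
  assumes g: "cofinal_seq g (cof \<alpha>) \<alpha>" and d: "\<delta> < cof \<alpha>"
    and hc: "\<forall>\<zeta><\<delta>. h \<zeta> < cof \<alpha>"
  shows "\<exists>\<xi><cof \<alpha>. \<forall>\<zeta><\<delta>. h \<zeta> \<le> \<xi>"
proof (rule ccontr)
  assume nb: "\<not> (\<exists>\<xi><cof \<alpha>. \<forall>\<zeta><\<delta>. h \<zeta> \<le> \<xi>)"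
  define c where "c = cof \<alpha>"
  define k where "k = wfrec {(x, y::'o). x < y} (\<lambda>F \<zeta>. LEAST \<xi>. \<xi> < c \<and> h \<zeta> \<le> \<xi> \<and> (\<forall>\<zeta>'<\<zeta>. F \<zeta>' < \<xi>))"
  have keq: "k \<zeta> = (LEAST \<xi>. \<xi> < c \<and> h \<zeta> \<le> \<xi> \<and> (\<forall>\<zeta>'<\<zeta>. k \<zeta>' < \<xi>))" for \<zeta>
  proof -
    have wf: "wf {(x, y::'o). x < y}" by (rule wellorder_class.wf)
    show ?thesis unfolding k_def
      by (subst wfrec[OF wf]) (simp add: cut_def)
  qed
  define P where "P \<zeta> = (\<exists>\<xi><c. h \<zeta> \<le> \<xi> \<and> (\<forall>\<zeta>'<\<zeta>. k \<zeta>' < \<xi>))" for \<zeta>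
  have kP: "k \<zeta> < c \<and> h \<zeta> \<le> k \<zeta> \<and> (\<forall>\<zeta>'<\<zeta>. k \<zeta>' < k \<zeta>)" if "P \<zeta>" for \<zeta>
    using that unfolding P_def keq[of \<zeta>]
    by (smt (verit, best) LeastI_ex)
  show False
  proof (cases "\<forall>\<zeta><\<delta>. P \<zeta>")
    case True
    show False
    proof (rule no_short_cofinal[OF g d, of k])
      show "\<forall>\<zeta><\<delta>. k \<zeta> < cof \<alpha>" using True kP c_def by blast
      show "\<forall>\<zeta> \<zeta>'. \<zeta> < \<zeta>' \<and> \<zeta>' < \<delta> \<longrightarrow> k \<zeta> < k \<zeta>'" using True kP by blast
      show "\<forall>\<xi><cof \<alpha>. \<exists>\<zeta><\<delta>. \<xi> \<le> k \<zeta>"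
      proof (intro allI impI)
        fix \<xi> assume "\<xi> < cof \<alpha>"
        then obtain \<zeta> where "\<zeta> < \<delta>" "\<not> h \<zeta> \<le> \<xi>" using nb by blast
        then show "\<exists>\<zeta><\<delta>. \<xi> \<le> k \<zeta>" using True kP by (meson le_less_linear order.trans order_less_imp_le)
      qed
    qed
  next
    case False
    define z where "z = (LEAST \<zeta>. \<zeta> < \<delta> \<and> \<not> P \<zeta>)"
    have z: "z < \<delta>" "\<not> P z" using False LeastI_ex[of "\<lambda>\<zeta>. \<zeta> < \<delta> \<and> \<not> P \<zeta>"] z_def by auto
    have zb: "P \<zeta>" if "\<zeta> < z" for \<zeta>
      using not_less_Least[of \<zeta> "\<lambda>\<zeta>. \<zeta> < \<delta> \<and> \<not> P \<zeta>"] that z(1) z_def by auto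
    show False
    proof (rule no_short_cofinal[OF g _, of z k])
      show "z < cof \<alpha>" using z d by simp
      show "\<forall>\<zeta><z. k \<zeta> < cof \<alpha>" using zb kP c_def by blast
      show "\<forall>\<zeta> \<zeta>'. \<zeta> < \<zeta>' \<and> \<zeta>' < z \<longrightarrow> k \<zeta> < k \<zeta>'" using zb kP by blast
      show "\<forall>\<xi><cof \<alpha>. \<exists>\<zeta><z. \<xi> \<le> k \<zeta>"
      proof (intro allI impI)
        fix \<xi> assume xi: "\<xi> < cof \<alpha>"
        define m where "m = max \<xi> (h z)"
        have "m < c" using xi hc z d c_def m_def by auto
        then have "\<not> (\<forall>\<zeta>'<z. k \<zeta>' < m)" using z(2) unfolding P_def m_def by auto
        then obtain \<zeta> where "\<zeta> < z" "m \<le> k \<zeta>" by (auto simp: not_less)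
        then show "\<exists>\<zeta><z. \<xi> \<le> k \<zeta>" unfolding m_def by auto
      qed
    qed
  qed
qed


lemma CB_sub: "CB_level X (\<beta>::'o::wellorder) \<subseteq> topspace X - \<Union>(CB_level X ` {\<gamma>. \<gamma> < \<beta>})"
  by (subst CB_level_eq) (auto simp: isolated_points_of_def)

lemma CB_disj: "(\<gamma>::'o::wellorder) < \<beta> \<Longrightarrow> CB_level X \<gamma> \<inter> CB_level X \<beta> = {}"
  using CB_sub[of X \<beta>] by blast

lemma CB_isolate:
  assumes "y \<in> CB_level X (\<alpha>::'o::wellorder)"
  shows "\<exists>V. openin X V \<and> V \<inter> (topspace X - \<Union>(CB_level X ` {\<gamma>. \<gamma> < \<alpha>})) = {y}"
  using assms by (subst (asm) CB_level_eq) (auto simp: isolated_points_of_def)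

lemma CB_open_upto: "openin X (\<Union>(CB_level X ` {\<delta>. \<delta> \<le> (\<gamma>::'o::wellorder)}))"
proof (subst openin_subopen, intro ballI)
  fix x assume "x \<in> \<Union>(CB_level X ` {\<delta>. \<delta> \<le> \<gamma>})"
  then obtain \<delta> where d: "\<delta> \<le> \<gamma>" "x \<in> CB_level X \<delta>" by auto
  then obtain U where U: "openin X U" "U \<inter> (topspace X - \<Union>(CB_level X ` {\<gamma>. \<gamma> < \<delta>})) = {x}"
    using CB_isolate[OF d(2)] by blast
  have "U \<subseteq> \<Union>(CB_level X ` {\<delta>. \<delta> \<le> \<gamma>})"
  proof
    fix u assume u: "u \<in> U"
    then have "u \<in> topspace X" using U(1) openin_subset by blast
    show "u \<in> \<Union>(CB_level X ` {\<delta>. \<delta> \<le> \<gamma>})"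
    proof (cases "u \<in> \<Union>(CB_level X ` {\<gamma>. \<gamma> < \<delta>})")
      case True then obtain \<delta>' where "\<delta>' < \<delta>" "u \<in> CB_level X \<delta>'" by blast
      then have "\<delta>' \<le> \<gamma>" using d(1) by simp
      then show ?thesis using \<open>u \<in> CB_level X \<delta>'\<close> by blast
    next
      case False then have "u \<in> U \<inter> (topspace X - \<Union>(CB_level X ` {\<gamma>. \<gamma> < \<delta>}))"
        using u \<open>u \<in> topspace X\<close> by simp
      then have "u = x" using U(2) by simp
      then show ?thesis using d by auto
    qed
  qed
  then show "\<exists>T. openin X T \<and> x \<in> T \<and> T \<subseteq> \<Union>(CB_level X ` {\<delta>. \<delta> \<le> \<gamma>})"
    using U by blast
qed

lemma CB_scattered:
  assumes sc: "scattered_space X" and W: "openin X W" "x \<in> W"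
    and x: "x \<in> topspace X - \<Union>(CB_level X ` {\<gamma>. \<gamma> < (\<beta>::'o::wellorder)})"
  shows "W \<inter> CB_level X \<beta> \<noteq> {}"
proof -
  let ?R = "topspace X - \<Union>(CB_level X ` {\<gamma>. \<gamma> < \<beta>})"
  have "W \<inter> ?R \<subseteq> topspace X" "W \<inter> ?R \<noteq> {}" using W x by auto
  then obtain z where "z \<in> isolated_points_of X (W \<inter> ?R)"
    using sc unfolding scattered_space_def by blast
  then obtain U where U: "z \<in> W \<inter> ?R" "openin X U" "U \<inter> (W \<inter> ?R) = {z}"
    unfolding isolated_points_of_def by blast
  have "openin X (U \<inter> W)" using U(2) W(1) by blast
  moreover have "(U \<inter> W) \<inter> ?R = {z}" using U(3) by blast
  ultimately have "z \<in> isolated_points_of X ?R" using U(1) unfolding isolated_points_of_def by blast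
  then have "z \<in> CB_level X \<beta>" by (subst CB_level_eq)
  then show ?thesis using U(1) by blast
qed

lemma CB_compact_bound:
  assumes K: "compactin X K" and KR: "K \<inter> (topspace X - \<Union>(CB_level X ` {\<gamma>. \<gamma> < \<alpha>})) = {}"
    and a: "(\<gamma>0::'o::wellorder) < \<alpha>"
  shows "\<exists>\<gamma><\<alpha>. K \<subseteq> \<Union>(CB_level X ` {\<delta>. \<delta> \<le> \<gamma>})"
proof -
  let ?O = "\<lambda>\<gamma>. \<Union>(CB_level X ` {\<delta>. \<delta> \<le> (\<gamma>::'o)})"
  have "K \<subseteq> topspace X" using K compactin_subset_topspace by blast
  have KU: "K \<subseteq> \<Union>(?O ` {\<gamma>. \<gamma> < \<alpha>})"
  proof
    fix x assume "x \<in> K"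
    then have "x \<in> \<Union>(CB_level X ` {\<gamma>. \<gamma> < \<alpha>})" using KR \<open>K \<subseteq> topspace X\<close> by blast
    then obtain \<gamma> where "\<gamma> < \<alpha>" "x \<in> CB_level X \<gamma>" by blast
    then have "x \<in> ?O \<gamma>" by blast
    then show "x \<in> \<Union>(?O ` {\<gamma>. \<gamma> < \<alpha>})" using \<open>\<gamma> < \<alpha>\<close> by blast
  qed
  have OO: "\<forall>U\<in>?O ` {\<gamma>. \<gamma> < \<alpha>}. openin X U" using CB_open_upto by blast
  have "\<exists>F. finite F \<and> F \<subseteq> ?O ` {\<gamma>. \<gamma> < \<alpha>} \<and> K \<subseteq> \<Union>F"
    using K KU OO unfolding compactin_def by blast
  then obtain F where F: "finite F" "F \<subseteq> ?O ` {\<gamma>. \<gamma> < \<alpha>}" "K \<subseteq> \<Union>F"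
    by blast
  then obtain G where G: "G \<subseteq> {\<gamma>. \<gamma> < \<alpha>}" "finite G" "F = ?O ` G"
    using finite_subset_image[OF F(1) F(2)] by blast
  show ?thesis
  proof (cases "G = {}")
    case True then show ?thesis using F G a by auto
  next
    case False
    have "Max G < \<alpha>" using G False by auto
    moreover have "K \<subseteq> ?O (Max G)"
    proof
      fix x assume "x \<in> K"
      then obtain \<gamma> \<delta> where "\<gamma> \<in> G" "\<delta> \<le> \<gamma>" "x \<in> CB_level X \<delta>" using F G by auto
      moreover have "\<gamma> \<le> Max G" using G \<open>\<gamma> \<in> G\<close> by auto
      ultimately have "\<delta> \<le> Max G" "x \<in> CB_level X \<delta>" by auto
      then show "x \<in> ?O (Max G)" by blast
    qed
    ultimately show ?thesis by blast
  qed
qed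


theorem proposition1p1:
  fixes \<kappa> :: "'k rel" and \<eta> \<alpha> :: "'o::wellorder" and X :: "'a topology"
  assumes kappa_card: "Card_order \<kappa>" and kappa_inf: "Cinfinite \<kappa>"
    and kappa_reg: "regularCard \<kappa>"
    and eta: "(cardSuc (cardSuc \<kappa>), ord_seg \<eta>) \<in> ordLess"
    and X: "LCS_space X" and ht: "reduced_height_is X \<eta>"
    and alpha: "\<alpha> < \<eta>"
    and cf: "(cardSuc \<kappa>, ord_seg (cof \<alpha>)) \<in> ordLess"
    and seq: "\<exists>g. cofinal_seq g (cof \<alpha>) \<alpha> \<and>
                 (\<forall>\<xi>. \<xi> < cof \<alpha> \<longrightarrow> (card_of (CB_level X (g \<xi>)), \<kappa>) \<in> ordLeq)"
  shows "(card_of (CB_level X \<alpha>), \<kappa>) \<in> ordLeq"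
proof (rule ccontr)
  assume big: "(card_of (CB_level X \<alpha>), \<kappa>) \<notin> ordLeq"
  let ?L = "CB_level X :: 'o \<Rightarrow> 'a set"
  define c where "c = cof \<alpha>"
  obtain g where g: "cofinal_seq g c \<alpha>" and gs: "\<forall>\<xi><c. |?L (g \<xi>)| \<le>o \<kappa>"
    using seq c_def by blast
  have WK: "Well_order \<kappa>" using kappa_card card_order_on_well_order_on by blast
  have CS: "Card_order (cardSuc \<kappa>)" using cardSuc_Card_order[OF kappa_card] .
  have WS: "Well_order (cardSuc \<kappa>)" using CS card_order_on_well_order_on by blast
  have "\<exists>a\<in>Field (ord_seg c). cardSuc \<kappa> =o Restr (ord_seg c) (underS (ord_seg c) a)"
    using cf ordLess_iff_ordIso_Restr[OF Well_order_ord_seg WS] c_def by blast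
  then obtain d0 where d00: "d0 \<in> Field (ord_seg c)" "cardSuc \<kappa> =o Restr (ord_seg c) (underS (ord_seg c) d0)"
    by blast
  have d0c: "d0 < c" using d00(1) Field_ord_seg by blast
  have d0: "d0 < c" "cardSuc \<kappa> =o ord_seg d0"
    using d0c d00(2) Restr_ord_seg[OF d0c] by simp_all
  have "\<kappa> <o |?L \<alpha>|" using big not_ordLeq_iff_ordLess[OF WK card_of_Well_order] by blast
  then have "cardSuc \<kappa> \<le>o |?L \<alpha>|" using cardSuc_ordLess_ordLeq[OF kappa_card card_of_Card_order] by blast
  then have "ord_seg d0 \<le>o |?L \<alpha>|" using ordIso_ordLeq_trans[OF ordIso_symmetric[OF d0(2)]] by blast
  then have "|Field (ord_seg d0)| \<le>o |Field |?L \<alpha>||" by (rule card_of_mono2)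
  then have "|{x. x < d0}| \<le>o |?L \<alpha>|" by (simp only: Field_ord_seg Field_card_of)
  then have "\<exists>e. inj_on e {x. x < d0} \<and> e ` {x. x < d0} \<subseteq> ?L \<alpha>"
    by (rule iffD2[OF card_of_ordLeq])
  then obtain e where e: "inj_on e {x. x < d0}" "e ` {x. x < d0} \<subseteq> ?L \<alpha>"
    by blast
  have "\<kappa> <o ord_seg d0"
    using ordLess_ordIso_trans[OF cardSuc_greater[OF kappa_card] d0(2)] .
  then have "\<kappa> \<le>o ord_seg d0" by (rule ordLess_imp_ordLeq)
  then have "|Field \<kappa>| \<le>o |Field (ord_seg d0)|" by (rule card_of_mono2)
  then have "|Field \<kappa>| \<le>o |{x. x < d0}|" by (simp only: Field_ord_seg)
  then have "\<exists>f. inj_on f (Field \<kappa>) \<and> f ` Field \<kappa> \<subseteq> {x. x < d0}"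
    by (rule iffD2[OF card_of_ordLeq])
  then obtain f where f: "inj_on f (Field \<kappa>)" "f ` Field \<kappa> \<subseteq> {x. x < d0}"
    by blast
  have "infinite (Field \<kappa>)" using kappa_inf unfolding cinfinite_def by blast
  have infd: "infinite {x. x < d0}"
  proof
    assume "finite {x. x < d0}"
    then have "finite (f ` Field \<kappa>)" using f(2) finite_subset by blast
    then have "finite (Field \<kappa>)" using f(1) finite_imageD by blast
    then show False using \<open>infinite (Field \<kappa>)\<close> by blast
  qed
  obtain A where A: "finite A" "card A = 2" "A \<subseteq> {x. x < d0}"
    using infinite_arbitrarily_large[OF infd] by blast
  have "\<exists>x y. A = {x, y} \<and> x \<noteq> y" using A(2) by (simp only: card_2_iff)
  then obtain a1 a2 where a12: "A = {a1, a2}" "a1 \<noteq> a2" by (elim exE conjE)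
  have a1: "a1 < d0" and a2: "a2 < d0" using A(3) a12(1) by auto
  obtain b1 b2 where b: "b1 < b2" "b2 < d0"
  proof (cases "a1 < a2")
    case True then show ?thesis using that a2 by blast
  next
    case False then have "a2 < a1" using a12(2) by simp
    then show ?thesis using that a1 by blast
  qed
  have climit: "\<exists>\<xi>'<c. \<xi> < \<xi>'" if "\<xi> < c" for \<xi>
  proof (rule ccontr)
    assume nx: "\<not> (\<exists>\<xi>'<c. \<xi> < \<xi>')"
    define w1 where "w1 = (LEAST x::'o. \<exists>y. y < x)"
    have w1a: "\<exists>y. y < w1" unfolding w1_def by (rule LeastI[of _ b2]) (use b in blast)
    have w1b: "w1 \<le> b2" unfolding w1_def by (rule Least_le) (use b in blast)
    have w1c: "\<not> (\<exists>y. y < z)" if "z < w1" for z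
      using not_less_Least[of z "\<lambda>x. \<exists>y. y < x"] that w1_def by blast
    have gx: "g \<xi> < \<alpha>" using g that unfolding cofinal_seq_def by blast
    have "cofinal_seq (\<lambda>_. g \<xi>) w1 \<alpha>"
      unfolding cofinal_seq_def
    proof (intro conjI allI impI)
      fix \<beta> assume "\<beta> < \<alpha>"
      then obtain \<xi>1 where "\<xi>1 < c" "\<beta> \<le> g \<xi>1" using g unfolding cofinal_seq_def by blast
      moreover have "\<xi>1 \<le> \<xi>" using nx \<open>\<xi>1 < c\<close> by (meson not_le)
      ultimately have "\<beta> \<le> g \<xi>" using cofinal_mono[OF g _ that] order.trans by blast
      then show "\<exists>\<xi>'<w1. \<beta> \<le> g \<xi>" using w1a by blast
    next
      fix \<xi>1 \<zeta> :: 'o assume "\<xi>1 < \<zeta> \<and> \<zeta> < w1"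
      then show "g \<xi> < g \<xi>" using w1c by blast
    qed (use gx in auto)
    then have "c \<le> w1" unfolding c_def cof_def
      by (rule Least_le[where P="\<lambda>\<delta>. \<exists>g. cofinal_seq g \<delta> \<alpha>", OF exI])
    then show False using w1b b d0 by simp
  qed
  let ?R = "topspace X - \<Union>(?L ` {\<gamma>. \<gamma> < \<alpha>})"
  have HX: "Hausdorff_space X" and LC: "locally_compact_space X" and SC: "scattered_space X"
    using X unfolding LCS_space_def by auto
  have nbase: "neighbourhood_base_of (compactin X) X"
    using LC HX locally_compact_space_neighbourhood_base by blast
  have nb: "\<exists>W K. openin X W \<and> compactin X K \<and> y \<in> W \<and> W \<subseteq> K \<and> K \<inter> ?R = {y}"
    if y: "y \<in> ?L \<alpha>" for y
  proof -
    obtain V where V: "openin X V" "V \<inter> ?R = {y}" using CB_isolate[OF y] by blast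
    have yR: "y \<in> ?R" using subsetD[OF CB_sub[of X \<alpha>] y] .
    have yV: "y \<in> V" using V(2) by blast
    have "\<exists>U K. openin X U \<and> compactin X K \<and> y \<in> U \<and> U \<subseteq> K \<and> K \<subseteq> V"
      using nbase[unfolded neighbourhood_base_of, rule_format, OF conjI[OF V(1) yV]] .
    then obtain U K where UK: "openin X U" "compactin X K" "y \<in> U" "U \<subseteq> K" "K \<subseteq> V"
      by (elim exE conjE)
    have "K \<inter> ?R = {y}" using UK V yR by blast
    then show ?thesis using UK by blast
  qed
  obtain W K where WK: "\<forall>y\<in>?L \<alpha>. openin X (W y) \<and> compactin X (K y) \<and> y \<in> W y \<and> W y \<subseteq> K y \<and> K y \<inter> ?R = {y}"
    using nb by (metis (no_types))
  have gc: "g \<xi> < \<alpha>" if "\<xi> < c" for \<xi> using g that unfolding cofinal_seq_def by blast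
  define Q where "Q \<zeta> \<zeta>' \<xi> = (\<xi> < c \<and> (\<zeta> \<noteq> \<zeta>' \<longrightarrow> (\<forall>\<xi>'. \<xi> \<le> \<xi>' \<and> \<xi>' < c \<longrightarrow> K (e \<zeta>) \<inter> K (e \<zeta>') \<inter> ?L (g \<xi>') = {})))" for \<zeta> \<zeta>' \<xi>
  have pairex: "\<exists>\<xi>. Q \<zeta> \<zeta>' \<xi>" if z: "\<zeta> < d0" "\<zeta>' < d0" for \<zeta> \<zeta>'
  proof (cases "\<zeta> = \<zeta>'")
    case True then show ?thesis unfolding Q_def using d0 by blast
  next
    case False
    have ey: "e \<zeta> \<in> ?L \<alpha>" "e \<zeta>' \<in> ?L \<alpha>" using e z by auto
    have ne: "e \<zeta> \<noteq> e \<zeta>'" using e(1) z False unfolding inj_on_def by auto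
    let ?C = "K (e \<zeta>) \<inter> K (e \<zeta>')"
    have w1: "compactin X (K (e \<zeta>))" "K (e \<zeta>) \<inter> ?R = {e \<zeta>}" using bspec[OF WK ey(1)] by simp_all
    have w2: "compactin X (K (e \<zeta>'))" "K (e \<zeta>') \<inter> ?R = {e \<zeta>'}" using bspec[OF WK ey(2)] by simp_all
    have Cc: "compactin X ?C" using compactin_Int[OF HX w1(1) w2(1)] .
    have CR: "?C \<inter> ?R = {}"
    proof -
      have "?C \<inter> ?R \<subseteq> {e \<zeta>} \<inter> {e \<zeta>'}" using w1(2) w2(2) by blast
      then show ?thesis using ne by blast
    qed
    obtain \<gamma> where gam: "\<gamma> < \<alpha>" "?C \<subseteq> \<Union>(?L ` {\<delta>. \<delta> \<le> \<gamma>})"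
      using CB_compact_bound[OF Cc CR gc[OF d0(1)]] by blast
    obtain \<xi>1 where x1: "\<xi>1 < c" "\<gamma> \<le> g \<xi>1" using g gam(1) unfolding cofinal_seq_def by blast
    obtain \<xi>2 where x2: "\<xi>2 < c" "\<xi>1 < \<xi>2" using climit[OF x1(1)] by blast
    have "\<forall>\<xi>'. \<xi>2 \<le> \<xi>' \<and> \<xi>' < c \<longrightarrow> ?C \<inter> ?L (g \<xi>') = {}"
    proof (intro allI impI)
      fix \<xi>' assume xx: "\<xi>2 \<le> \<xi>' \<and> \<xi>' < c"
      have "g \<xi>1 < g \<xi>2" using g x1 x2 unfolding cofinal_seq_def by blast
      moreover have "g \<xi>2 \<le> g \<xi>'" using cofinal_mono[OF g] xx by blast
      ultimately have lt: "\<gamma> < g \<xi>'" using x1(2) by simp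
      have "?L \<delta> \<inter> ?L (g \<xi>') = {}" if "\<delta> \<le> \<gamma>" for \<delta>
        using CB_disj[of \<delta> "g \<xi>'" X] that lt by simp
      then show "?C \<inter> ?L (g \<xi>') = {}" using gam(2) by blast
    qed
    then show ?thesis unfolding Q_def using x2 False by blast
  qed
  define p where "p \<zeta> \<zeta>' = (SOME \<xi>. Q \<zeta> \<zeta>' \<xi>)" for \<zeta> \<zeta>'
  have pQ: "Q \<zeta> \<zeta>' (p \<zeta> \<zeta>')" if "\<zeta> < d0" "\<zeta>' < d0" for \<zeta> \<zeta>'
    unfolding p_def using someI_ex[OF pairex[OF that]] .
  have qex: "\<exists>b<c. \<forall>\<zeta>'<d0. p \<zeta> \<zeta>' \<le> b" if "\<zeta> < d0" for \<zeta>
    using bounded_below_cof[OF g[unfolded c_def] d0(1)[unfolded c_def], of "p \<zeta>"] pQ[OF that] c_def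
    unfolding Q_def by blast
  define q where "q \<zeta> = (SOME b. b < c \<and> (\<forall>\<zeta>'<d0. p \<zeta> \<zeta>' \<le> b))" for \<zeta>
  have qq: "q \<zeta> < c \<and> (\<forall>\<zeta>'<d0. p \<zeta> \<zeta>' \<le> q \<zeta>)" if "\<zeta> < d0" for \<zeta>
    unfolding q_def using someI_ex[OF qex[OF that]] by blast
  obtain s where s: "s < c" "\<forall>\<zeta><d0. q \<zeta> \<le> s"
    using bounded_below_cof[OF g[unfolded c_def] d0(1)[unfolded c_def], of q] qq c_def by blast
  have ps: "p \<zeta> \<zeta>' \<le> s" if "\<zeta> < d0" "\<zeta>' < d0" for \<zeta> \<zeta>'
  proof -
    have "p \<zeta> \<zeta>' \<le> q \<zeta>" using qq[OF that(1)] that(2) by blast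
    moreover have "q \<zeta> \<le> s" using s(2) that(1) by blast
    ultimately show ?thesis by (rule order.trans)
  qed
  define \<beta> where "\<beta> = g s"
  have b\<alpha>: "\<beta> < \<alpha>" using gc[OF s(1)] \<beta>_def by simp
  have ex_d: "\<exists>z. z \<in> W (e \<zeta>) \<inter> ?L \<beta>" if "\<zeta> < d0" for \<zeta>
  proof -
    have ey: "e \<zeta> \<in> ?L \<alpha>" using e that by auto
    then have eR: "e \<zeta> \<in> ?R" using subsetD[OF CB_sub[of X \<alpha>]] by blast
    have sub: "\<Union>(?L ` {\<gamma>. \<gamma> < \<beta>}) \<subseteq> \<Union>(?L ` {\<gamma>. \<gamma> < \<alpha>})"
      using b\<alpha> by (auto intro: order.strict_trans)
    have "e \<zeta> \<in> topspace X - \<Union>(?L ` {\<gamma>. \<gamma> < \<beta>})" using eR sub by blast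
    moreover have "openin X (W (e \<zeta>))" "e \<zeta> \<in> W (e \<zeta>)" using bspec[OF WK ey] by simp_all
    ultimately have "W (e \<zeta>) \<inter> ?L \<beta> \<noteq> {}" using CB_scattered[OF SC] by blast
    then show ?thesis by blast
  qed
  define d where "d \<zeta> = (SOME z. z \<in> W (e \<zeta>) \<inter> ?L \<beta>)" for \<zeta>
  have dd: "d \<zeta> \<in> W (e \<zeta>) \<inter> ?L \<beta>" if "\<zeta> < d0" for \<zeta>
    unfolding d_def using someI_ex[OF ex_d[OF that]] .
  have "inj_on d {x. x < d0}"
  proof (rule inj_onI, rule ccontr)
    fix \<zeta> \<zeta>' assume z: "\<zeta> \<in> {x. x < d0}" "\<zeta>' \<in> {x. x < d0}" "d \<zeta> = d \<zeta>'" "\<zeta> \<noteq> \<zeta>'"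
    have ey: "e \<zeta> \<in> ?L \<alpha>" "e \<zeta>' \<in> ?L \<alpha>" using e z by auto
    have "d \<zeta> \<in> K (e \<zeta>) \<inter> K (e \<zeta>') \<inter> ?L (g s)"
      using dd[of \<zeta>] dd[of \<zeta>'] z WK ey \<beta>_def by auto
    moreover have "K (e \<zeta>) \<inter> K (e \<zeta>') \<inter> ?L (g s) = {}"
      using pQ[of \<zeta> \<zeta>'] ps[of \<zeta> \<zeta>'] z s(1) unfolding Q_def by auto
    ultimately show False by blast
  qed
  moreover have "d ` {x. x < d0} \<subseteq> ?L \<beta>" using dd by blast
  ultimately have "|{x. x < d0}| \<le>o |?L \<beta>|" by (intro iffD1[OF card_of_ordLeq] exI conjI)
  also have "|?L \<beta>| \<le>o \<kappa>" using gs s(1) \<beta>_def by blast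
  finally have A: "|{x. x < d0}| \<le>o \<kappa>" .
  have "|Field (cardSuc \<kappa>)| \<le>o |Field (ord_seg d0)|"
    using card_of_mono2 d0(2) ordIso_iff_ordLeq by blast
  then have "|Field (cardSuc \<kappa>)| \<le>o \<kappa>" using A Field_ord_seg ordLeq_transitive by metis
  then have "cardSuc \<kappa> \<le>o \<kappa>"
    using card_of_Field_ordIso[OF CS] ordIso_symmetric ordIso_ordLeq_trans by blast
  then show False using cardSuc_greater[OF kappa_card] not_ordLess_ordLeq by blast
qed

end
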